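(* Let $P_0,P_1,Q_2\in\mathbb H$ be pairwise distinct with $\langle P_0,P_1\rangle=\langle P_0,Q_2\rangle=\langle P_1,Q_2\rangle$ (i.e. $P_0P_1Q_2$ is equilateral). Then there is $\varepsilon_2\in\{-1,1\}$ such that $$Q_2=\frac{-\langle P_0,P_1\rangle(P_0+P_1)+\varepsilon_2\sqrt{1-2\langle P_0,P_1\rangle}\,P_0\tilde\times P_1}{1-\langle P_0,P_1\rangle}.$$
   Context: $\langle v,w\rangle=-v_1w_1+v_2w_2+v_3w_3$ on $\mathbb R^3$; $\mathbb H=\{P\in\mathbb R^3:\langle P,P\rangle=-1,\ P_1\ge1\}$; $v\tilde\times w:=J(v\times w)$ with $J=\mathrm{diag}(-1,1,1)$ and $\times$ the Euclidean cross product. *)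

theory Defs
  imports "HOL-Analysis.Analysis"
begin

definition lor :: "real^3 \<Rightarrow> real^3 \<Rightarrow> real" where
  "lor v w = - (v$1 * w$1) + v$2 * w$2 + v$3 * w$3"

definition hyp :: "(real^3) set" where
  "hyp = {P. lor P P = -1 \<and> P$1 \<ge> 1}"

definition Jmap :: "real^3 \<Rightarrow> real^3" where
  "Jmap v = (\<chi> i. if i = 1 then - (v$i) else v$i)"

definition lcross :: "real^3 \<Rightarrow> real^3 \<Rightarrow> real^3" where
  "lcross v w = Jmap (cross3 v w)"

end

theory Submission
  imports Defs
begin
lemma lt: fixes x1 x2 x3 y1 y2 y3 :: real
  assumes "-x1*x1+x2*x2+x3*x3 = -1" "-y1*y1+y2*y2+y3*y3 = -1" "x1\<ge>1" "y1 \<ge> 1"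
   and "\<not> (x1=y1 \<and> x2=y2 \<and> x3=y3)"
  shows "-x1*y1+x2*y2+x3*y3 < -1"
proof (rule ccontr)
  assume c: "\<not> ?thesis"
  have id: "(x1*y1)^2 = (1+x2*y2+x3*y3)^2 + ((x2-y2)^2+(x3-y3)^2+(x2*y3-x3*y2)^2)"
    using assms(1,2) by algebra
  have p: "x1*y1 \<ge> 1" using assms(3,4) using mult_mono[of 1 x1 1 y1] by simp
  have "(x1*y1)^2 \<le> (1+x2*y2+x3*y3)^2" using c p by (intro power_mono) auto
  with id have "(x2-y2)^2+(x3-y3)^2+(x2*y3-x3*y2)^2 \<le> 0" by linarith
  hence "x2 = y2" "x3 = y3" by (smt (verit) zero_le_power2 power_zero_numeral zero_eq_power2)+
  hence "x1*x1 = y1*y1" using assms(1,2) by simp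
  hence "(x1-y1)*(x1+y1) = 0" by algebra
  hence "x1 = y1" using assms(3,4) by simp
  thus False using assms(5) \<open>x2=y2\<close> \<open>x3=y3\<close> by simp
qed

lemma vec3_eq: "(v::real^3) = w \<longleftrightarrow> v$1=w$1 \<and> v$2=w$2 \<and> v$3=w$3"
  by (simp add: vec_eq_iff forall_3)
lemma lc: "lcross v w $ 1 = -(v$2*w$3 - v$3*w$2)" "lcross v w $ 2 = v$3*w$1 - v$1*w$3"
  "lcross v w $ 3 = v$1*w$2 - v$2*w$1"
  by (simp_all add: lcross_def Jmap_def cross3_def)
lemma lor_add: "lor (u+v) w = lor u w + lor v w" "lor w (u+v) = lor w u + lor w v"
  by (simp_all add: lor_def algebra_simps)
lemma lor_diff: "lor (u-v) w = lor u w - lor v w"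
  by (simp_all add: lor_def algebra_simps)
lemma lor_scale: "lor (c *\<^sub>R u) w = c * lor u w" "lor w (c *\<^sub>R u) = c * lor w u"
  by (simp_all add: lor_def algebra_simps)
lemma lor_sym: "lor u w = lor w u" by (simp add: lor_def algebra_simps)
lemma lor_cross: "lor (lcross u w) u = 0" "lor (lcross u w) w = 0"
  by (simp_all add: lor_def lc algebra_simps)
lemma lor_cross_self: "lor (lcross u w) (lcross u w) = (lor u w)^2 - lor u u * lor w w"
  by (simp add: lor_def lc power2_eq_square algebra_simps)

lemma hyp_lt:
  assumes "P \<in> hyp" "Q \<in> hyp" "P \<noteq> Q" shows "lor P Q < -1"
  using assms lt[of "P$1" "P$2" "P$3" "Q$1" "Q$2" "Q$3"]
  by (auto simp: hyp_def lor_def vec3_eq)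

theorem corollary2p3:
  fixes P0 P1 Q2 :: "real^3"
  assumes "P0 \<in> hyp" "P1 \<in> hyp" "Q2 \<in> hyp"
    and "P0 \<noteq> P1" "P0 \<noteq> Q2" "P1 \<noteq> Q2"
    and "lor P0 P1 = lor P0 Q2" "lor P0 Q2 = lor P1 Q2"
  shows "\<exists>\<epsilon>2 :: real. \<epsilon>2 \<in> {-1, 1} \<and>
    Q2 = (1 / (1 - lor P0 P1)) *\<^sub>R
      ((- lor P0 P1) *\<^sub>R (P0 + P1)
       + (\<epsilon>2 * sqrt (1 - 2 * lor P0 P1)) *\<^sub>R lcross P0 P1)"
proof -
  define a where "a = lor P0 P1"
  have alt: "a < -1" using hyp_lt assms(1,2,4) a_def by blast
  have h0: "lor P0 P0 = -1" "lor P1 P1 = -1" "lor Q2 Q2 = -1" using assms(1-3) by (auto simp: hyp_def)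
  have q0: "lor Q2 P0 = a" "lor Q2 P1 = a" using assms(7,8) a_def lor_sym by metis+
  define \<alpha> where "\<alpha> = -a/(1-a)"
  have al: "\<alpha> * (a - 1) = a" using alt by (simp add: \<alpha>_def field_simps)
  define R where "R = Q2 - \<alpha> *\<^sub>R (P0 + P1)"
  have r0: "lor R P0 = 0" "lor R P1 = 0"
    using al unfolding R_def lor_diff lor_scale lor_add q0 h0 a_def
    by (auto simp: lor_sym[of P1 P0] algebra_simps)
  define N where "N = lcross P0 P1"
  have nn: "lor N N = a^2 - 1" unfolding N_def lor_cross_self h0 a_def by simp
  have "a^2 > 1" using alt by (smt (verit) one_less_power pos2 power2_minus)
  hence nnpos: "lor N N > 0" using nn by simp
  define D where "D = (N$1)^2 + (N$2)^2 + (N$3)^2"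
  have Dpos: "D > 0"
  proof (rule ccontr)
    assume "\<not> D > 0"
    hence "N$1 = 0 \<and> N$2 = 0 \<and> N$3 = 0" unfolding D_def
      by (smt (verit) zero_le_power2 power_zero_numeral zero_eq_power2)
    hence "lor N N = 0" by (simp add: lor_def)
    thus False using nnpos by simp
  qed
  define k where "k = R$1 * N$1 + R$2 * N$2 + R$3 * N$3"
  have pp: "R$1 * D = k * N$1" "R$2 * D = k * N$2" "R$3 * D = k * N$3"
    using r0 unfolding D_def k_def N_def lc lor_def by algebra+
  define t where "t = k / D"
  have RN: "R = t *\<^sub>R N" using pp Dpos unfolding vec3_eq t_def
    by (auto simp: field_simps)
  have Qe: "Q2 = \<alpha> *\<^sub>R (P0 + P1) + t *\<^sub>R N" using RN R_def by (simp add: algebra_simps)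
  have "lor Q2 Q2 = \<alpha>^2 * (2*a - 2) + t^2 * (a^2 - 1)"
    unfolding Qe lor_add lor_scale nn
    using lor_cross[of P0 P1] h0 unfolding N_def[symmetric] a_def
    by (simp add: lor_sym[of P1 P0] lor_sym[of _ N] power2_eq_square algebra_simps)
  hence E: "\<alpha>^2 * (2*a - 2) + t^2 * (a^2 - 1) = -1" using h0(3) by simp
  have ne: "1 - a \<noteq> 0" using alt by simp
  have A2: "(1-a)*(\<alpha>^2 * (2*a - 2)) = -2*a^2"
  proof -
    have "(1-a)*(\<alpha>^2 * (2*a - 2)) = -2 * (\<alpha> * (1-a))^2" by (simp add: power2_eq_square algebra_simps)
    also have "\<alpha> * (1-a) = -a" using ne by (simp add: \<alpha>_def)
    finally show ?thesis by simp
  qed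
  have "(1-a) * (\<alpha>^2 * (2*a - 2) + t^2 * (a^2 - 1)) = -(1-a)" using E by simp
  hence "(a+1) * ((1-2*a) - t^2*(1-a)^2) = 0" using A2 by algebra
  hence "t^2*(1-a)^2 = 1-2*a" using alt by simp
  hence teq: "t^2 = (sqrt (1 - 2*a) / (1 - a))^2" using alt
    by (simp add: power_divide field_simps)
  obtain e :: real where e: "e \<in> {-1,1}" "t = e * (sqrt (1 - 2*a) / (1 - a))"
    using teq by (metis power2_eq_iff insert_iff mult_1 mult_minus1)
  show ?thesis
  proof (intro exI conjI)
    show "e \<in> {-1,1}" by fact
    show "Q2 = (1 / (1 - lor P0 P1)) *\<^sub>R ((- lor P0 P1) *\<^sub>R (P0 + P1)
       + (e * sqrt (1 - 2 * lor P0 P1)) *\<^sub>R lcross P0 P1)"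
      unfolding Qe e(2) a_def[symmetric] N_def[symmetric] \<alpha>_def
      by (simp add: scaleR_add_right scaleR_diff_right)
  qed
qed
end
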